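(* For $|\delta|<1$ and $a,b\in\mathbb{R}$ let $\phi(\delta,a,b)=\mathbb{P}(Z_\delta\in[a,\infty)\times[b,\infty))-\mathbb{P}(Z_0\in[a,\infty)\times[b,\infty))$, where $Z_\delta\sim N\Big(0,\begin{pmatrix}1&\delta\\ \delta&1\end{pmatrix}\Big)$. Then for all $a,b>0$ and $|\delta|<1$, \[ |\phi(\delta,a,b)|\le\frac{1}{2\pi}\frac{1}{\sqrt{1-\delta^2}}\exp\Big(-\frac{a^2+b^2}{2}\Big)\exp\Big(\frac{|\delta|ab}{1-\delta^2}\Big)|\delta|. \] *)

theory Defs
  imports "HOL-Probability.Probability"
begin

definition bvn_density :: "real \<Rightarrow> real \<times> real \<Rightarrow> real" where
  "bvn_density d z = (let x = fst z; y = snd z in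
     exp (- (x^2 - 2 * d * x * y + y^2) / (2 * (1 - d^2))) / (2 * pi * sqrt (1 - d^2)))"

definition bvn :: "real \<Rightarrow> (real \<times> real) measure" where
  "bvn d = density lborel (\<lambda>z. ennreal (bvn_density d z))"

definition phi :: "real \<Rightarrow> real \<Rightarrow> real \<Rightarrow> real" where
  "phi d a b = measure (bvn d) ({a..} \<times> {b..}) - measure (bvn 0) ({a..} \<times> {b..})"

end

theory Submission
  imports Defs "HOL-Real_Asymp.Real_Asymp"
begin

definition FF :: "real \<Rightarrow> real \<Rightarrow> real \<Rightarrow> real" where
  "FF r x y = exp (- (x^2 - 2 * r * x * y + y^2) / (2 * (1 - r^2))) / (2 * pi * sqrt (1 - r^2))"
definition KK :: "real \<Rightarrow> real \<Rightarrow> real \<Rightarrow> real" where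
  "KK r x y = - FF r x y * (x - r * y) / (1 - r^2)"
definition GG :: "real \<Rightarrow> real \<Rightarrow> real \<Rightarrow> real" where
  "GG r x y = FF r x y * ((x - r * y) * (y - r * x) / (1 - r^2)^2 + r / (1 - r^2))"

definition cF :: "real \<Rightarrow> real" where "cF r = 1 / (2 * pi * sqrt (1 - r^2))"
definition eF :: "real \<Rightarrow> real \<Rightarrow> real \<Rightarrow> real" where
  "eF r x y = - (x^2 - 2 * r * x * y + y^2) / (2 * (1 - r^2))"

lemma FF_alt: "FF r x y = cF r * exp (eF r x y)"
  by (simp add: FF_def cF_def eF_def)

lemma DS: assumes "1 - r^2 > 0" shows "((\<lambda>r. sqrt (1 - r^2)) has_real_derivative (- r / sqrt (1 - r^2))) (at r)"
proof -
  have "((\<lambda>r. sqrt (1 - r^2)) has_real_derivative (inverse (sqrt (1 - r^2)) / 2 * (0 - 2 * r))) (at r)"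
    by (intro DERIV_real_sqrt[THEN DERIV_chain2] assms derivative_eq_intros) auto
  then show ?thesis by (simp add: field_simps)
qed

lemma DcF: assumes s: "1 - r^2 > 0" shows "(cF has_real_derivative (cF r * (r / (1 - r^2)))) (at r)"
proof -
  have nz2: "2 * pi * sqrt (1 - r^2) \<noteq> 0" using s by simp
  have nz3: "sqrt (1 - r^2) \<noteq> 0" using s by simp
  have q: "sqrt (1 - r^2) * sqrt (1 - r^2) = 1 - r^2" using s by simp
  have "(cF has_real_derivative (0 * (2 * pi * sqrt (1 - r^2)) - 1 * (2 * pi * (- r / sqrt (1 - r^2)))) / (2 * pi * sqrt (1 - r^2) * (2 * pi * sqrt (1 - r^2)))) (at r)"
    unfolding cF_def[abs_def]
    by (intro DERIV_divide DERIV_cmult DS s nz2 DERIV_const)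
  moreover have "(0 * (2 * pi * sqrt (1 - r^2)) - 1 * (2 * pi * (- r / sqrt (1 - r^2)))) / (2 * pi * sqrt (1 - r^2) * (2 * pi * sqrt (1 - r^2)))
     = cF r * (r / (1 - r^2))"
    unfolding cF_def using nz3 s by (simp add: field_simps q)
  ultimately show ?thesis by simp
qed

lemma DeF_r: assumes s: "1 - r^2 > 0"
  shows "((\<lambda>r. eF r x y) has_real_derivative ((x - r * y) * (y - r * x) / (1 - r^2)^2)) (at r)"
proof -
  have nz1: "2 * (1 - r^2) \<noteq> 0" using s by simp
  have nz4: "1 - r^2 \<noteq> 0" using s by simp
  show ?thesis unfolding eF_def
  apply (rule derivative_eq_intros refl nz1)+
  using nz4 apply (simp add: divide_simps)
  apply (simp add: algebra_simps power2_eq_square power4_eq_xxxx)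
  done
qed

lemma DeF_x: assumes s: "1 - r^2 > 0"
  shows "((\<lambda>x. eF r x y) has_real_derivative (- (x - r * y) / (1 - r^2))) (at x)"
proof -
  have nz1: "2 * (1 - r^2) \<noteq> 0" using s by simp
  have nz4: "1 - r^2 \<noteq> 0" using s by simp
  show ?thesis unfolding eF_def
  apply (rule derivative_eq_intros refl nz1)+
  using nz4 apply (simp add: divide_simps)
  apply (simp add: algebra_simps power2_eq_square power4_eq_xxxx)
  done
qed

lemma D1: assumes s: "1 - r^2 > 0" shows "((\<lambda>r. FF r x y) has_real_derivative GG r x y) (at r)"
  unfolding FF_alt[abs_def] GG_def FF_alt
  by (rule derivative_eq_intros DcF DeF_r s refl)+ (simp add: algebra_simps)

lemma D3: assumes s: "1 - r^2 > 0" shows "((\<lambda>x. FF r x y) has_real_derivative KK r x y) (at x)"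
  unfolding FF_alt[abs_def] KK_def FF_alt
  by (rule derivative_eq_intros DeF_x s refl)+ (simp add: algebra_simps)

lemma D2: assumes s: "1 - r^2 > 0" shows "((\<lambda>y. KK r x y) has_real_derivative GG r x y) (at y)"
proof -
  have nz1: "2 * (1 - r^2) \<noteq> 0" using s by simp
  have nz2: "2 * pi * sqrt (1 - r^2) \<noteq> 0" using s by simp
  have nz3: "sqrt (1 - r^2) \<noteq> 0" using s by simp
  have nz4: "1 - r^2 \<noteq> 0" using s by simp
  show ?thesis
  unfolding KK_def FF_def GG_def
  apply (rule derivative_eq_intros refl nz1 nz2 nz4)+
  using s nz3 nz4 apply (simp add: divide_simps)
  apply (simp add: algebra_simps power2_eq_square power4_eq_xxxx)
  done
qed


lemma FTC_Ici:
  fixes F f :: "real \<Rightarrow> real"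
  assumes D: "\<And>x. (F has_real_derivative f x) (at x)"
    and C: "\<And>x. isCont f x"
    and I: "integrable lborel (\<lambda>x. indicator {a..} x * f x)"
    and L: "(F \<longlongrightarrow> l) at_top"
  shows "(\<integral>x. indicator {a..} x * f x \<partial>lborel) = l - F a"
proof -
  have si: "set_integrable lborel (einterval (ereal a) \<infinity>) f"
  proof -
    have "integrable lborel (\<lambda>x. indicator {a<..} x *\<^sub>R (indicator {a..} x * f x))"
      by (rule integrable_mult_indicator[OF _ I]) auto
    moreover have "\<And>x. indicator {a<..} x *\<^sub>R (indicator {a..} x * f x) = indicator (einterval (ereal a) \<infinity>) x *\<^sub>R f x"
      by (auto simp: einterval_def indicator_def)
    ultimately show ?thesis unfolding set_integrable_def by (simp only:)
  qed
  have cF: "isCont F a" using D by (rule DERIV_isCont)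
  have A: "((F \<circ> real_of_ereal) \<longlongrightarrow> F a) (at_right (ereal a))"
    unfolding ereal_tendsto_simps1
    using cF by (simp add: isCont_def tendsto_mono[OF at_within_le_at])
  have B: "((F \<circ> real_of_ereal) \<longlongrightarrow> l) (at_left \<infinity>)"
    unfolding ereal_tendsto_simps1 using L .
  have "(LBINT x=ereal a..\<infinity>. f x) = l - F a"
    by (rule interval_integral_FTC_integrable[OF _ _ _ si A B])
       (auto simp: has_real_derivative_iff_has_vector_derivative[symmetric] D C)
  moreover have "(LBINT x=ereal a..\<infinity>. f x) = (\<integral>x. indicator {a..} x * f x \<partial>lborel)"
  proof -
    have mf: "f \<in> borel_measurable borel" using C by (intro borel_measurable_continuous_onI continuous_at_imp_continuous_on) auto
    have "AE x in lborel. indicator {a<..} x *\<^sub>R f x = indicator {a..} x * f x"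
      using AE_lborel_singleton[of a] by eventually_elim (auto simp: indicator_def)
    then show ?thesis
      unfolding interval_integral_to_infinity_eq set_lebesgue_integral_def
      by (intro integral_cong_AE) (use mf in auto)
  qed
  ultimately show ?thesis by simp
qed

lemma integrable_gauss:
  fixes c :: real assumes c: "c > 0"
  shows "integrable lborel (\<lambda>x. exp (- c * x^2))"
proof -
  define s where "s = sqrt (1 / (2 * c))"
  have s2: "s^2 = 1 / (2 * c)" unfolding s_def using c by simp
  have spos: "s > 0" unfolding s_def using c by simp
  have "integrable lborel (\<lambda>x. sqrt (2 * pi * s^2) * normal_density 0 s x)"
    using spos by (intro integrable_mult_right integrable_normal_density)
  moreover have "\<And>x. sqrt (2 * pi * s^2) * normal_density 0 s x = exp (- c * x^2)"
  proof -
    fix x :: real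
    have e: "- ((x - 0)^2) / (2 * s^2) = - c * x^2" using c by (simp add: s2 field_simps)
    have n: "sqrt (2 * pi * s^2) \<noteq> 0" using spos by simp
    show "sqrt (2 * pi * s^2) * normal_density 0 s x = exp (- c * x^2)"
      unfolding normal_density_def e using n by simp
  qed
  ultimately show ?thesis by simp
qed

lemma integrable_pair_prod:
  fixes f :: "real \<Rightarrow> real" and g :: "'b::euclidean_space \<Rightarrow> real"
  assumes f: "integrable lborel f" and g: "integrable (lborel :: ('b::euclidean_space) measure) g"
  shows "integrable (lborel \<Otimes>\<^sub>M lborel) (\<lambda>(x, y). f x * g y)"
proof -
  interpret P: pair_sigma_finite "lborel :: real measure" "lborel :: 'b measure" ..
  have [measurable]: "f \<in> borel_measurable borel" "g \<in> borel_measurable borel"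
    using f g by auto
  show ?thesis
  proof (rule lborel_pair.Fubini_integrable)
    show "(\<lambda>(x, y). f x * g y) \<in> borel_measurable (lborel \<Otimes>\<^sub>M lborel)" by measurable
    have int: "integrable lborel (\<lambda>x. norm (f x) * (\<integral>y. norm (g y) \<partial>lborel))"
      using f by (intro integrable_mult_left) auto
    show "integrable lborel (\<lambda>x. \<integral>y. norm (case (x, y) of (x, y) \<Rightarrow> f x * g y) \<partial>lborel)"
    proof (rule Bochner_Integration.integrable_cong[THEN iffD1, OF refl _ int])
      fix x show "norm (f x) * (\<integral>y. norm (g y) \<partial>lborel) = (\<integral>y. norm (case (x, y) of (x, y) \<Rightarrow> f x * g y) \<partial>lborel)"
        by (simp add: abs_mult integral_mult_right_zero)
    qed
    show "AE x in lborel. integrable lborel (\<lambda>y. case (x, y) of (x, y) \<Rightarrow> f x * g y)"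
      using g by auto
  qed
qed

lemma integrable_gauss2:
  fixes c :: real assumes c: "c > 0"
  shows "integrable lborel (\<lambda>z::real\<times>real. exp (- c * (fst z)^2) * exp (- c * (snd z)^2))"
proof -
  have "integrable (lborel \<Otimes>\<^sub>M lborel) (\<lambda>(x::real, y::real). exp (- c * x^2) * exp (- c * y^2))"
    by (rule integrable_pair_prod[OF integrable_gauss[OF c] integrable_gauss[OF c]])
  then show ?thesis unfolding lborel_prod by (simp add: case_prod_beta')
qed



lemma quad_lower:
  fixes r t x y :: real
  assumes "\<bar>r\<bar> \<le> t"
  shows "(1 - t) * (x^2 + y^2) \<le> x^2 - 2 * r * x * y + y^2"
proof -
  have h1: "2 * \<bar>x * y\<bar> \<le> x^2 + y^2"
  proof -
    have "0 \<le> (\<bar>x\<bar> - \<bar>y\<bar>)^2" by simp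
    then show ?thesis by (simp add: power2_eq_square abs_mult algebra_simps)
  qed
  have h2: "\<bar>r * (x * y)\<bar> \<le> t * \<bar>x * y\<bar>"
    using assms by (simp add: abs_mult mult_right_mono)
  have h3: "- (2 * r * x * y) \<ge> - 2 * \<bar>r * (x * y)\<bar>"
    by (simp add: mult.assoc)
  have t0: "0 \<le> t" using assms by simp
  have "2 * t * \<bar>x * y\<bar> \<le> t * (x^2 + y^2)" using mult_left_mono[OF h1 t0]
    by (simp add: algebra_simps)
  then show ?thesis using h2 h3 by (simp add: algebra_simps)
qed

lemma FF_nonneg: "\<bar>r\<bar> < 1 \<Longrightarrow> 0 \<le> FF r x y"
proof -
  assume "\<bar>r\<bar> < 1"
  then have "\<bar>r\<bar>^2 < 1^2" by (intro power_strict_mono) auto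
  then have "r^2 < 1" by simp
  then show ?thesis unfolding FF_def by (intro divide_nonneg_pos) auto
qed

lemma s_bounds:
  fixes r t :: real
  assumes "\<bar>r\<bar> \<le> t" "t < 1"
  shows "1 - t^2 \<le> 1 - r^2" "0 < 1 - t^2" "1 - r^2 \<le> 1" "0 < 1 - r^2"
proof -
  have t0: "0 \<le> t" using assms(1) by (meson abs_ge_zero order_trans)
  have "\<bar>r\<bar>^2 \<le> t^2" using assms by (intro power_mono) auto
  then have "r^2 \<le> t^2" by simp
  moreover have "t^2 < 1^2" using assms t0 by (intro power_strict_mono) auto
  ultimately show "1 - t^2 \<le> 1 - r^2" "0 < 1 - t^2" "1 - r^2 \<le> 1" "0 < 1 - r^2" by auto
qed

definition CF :: "real \<Rightarrow> real" where "CF t = 1 / (2 * pi * sqrt (1 - t^2))"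

lemma FF_bound:
  fixes r t x y :: real
  assumes rt: "\<bar>r\<bar> \<le> t" and t1: "t < 1"
  shows "FF r x y \<le> CF t * exp (- ((1 - t) / 2) * x^2) * exp (- ((1 - t) / 2) * y^2)"
proof -
  note sb = s_bounds[OF rt t1]
  define Q where "Q = x^2 - 2 * r * x * y + y^2"
  have Ql: "(1 - t) * (x^2 + y^2) \<le> Q" unfolding Q_def by (rule quad_lower[OF rt])
  have t0: "0 \<le> 1 - t" using t1 by simp
  have Q0: "0 \<le> Q" using Ql t0 by (smt (verit) mult_nonneg_nonneg sum_power2_ge_zero)
  have "Q / 2 \<le> Q / (2 * (1 - r^2))"
    using sb Q0 by (intro divide_left_mono) auto
  moreover have e0: "- ((1 - t) / 2) * x^2 + - ((1 - t) / 2) * y^2 = - ((1 - t) * (x^2 + y^2) / 2)"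
    by (simp add: field_simps)
  ultimately have e1: "- Q / (2 * (1 - r^2)) \<le> - ((1 - t) / 2) * x^2 + - ((1 - t) / 2) * y^2"
    using Ql unfolding e0 minus_divide_left[symmetric] by linarith
  have "exp (- Q / (2 * (1 - r^2))) \<le> exp (- ((1 - t) / 2) * x^2) * exp (- ((1 - t) / 2) * y^2)"
    using e1 by (simp add: exp_add[symmetric])
  moreover have "1 / (2 * pi * sqrt (1 - r^2)) \<le> CF t"
    unfolding CF_def using sb by (intro divide_left_mono mult_left_mono mult_pos_pos) auto
  moreover have "0 \<le> 1 / (2 * pi * sqrt (1 - r^2))" using sb by simp
  ultimately have "exp (- Q / (2 * (1 - r^2))) * (1 / (2 * pi * sqrt (1 - r^2))) \<le>
      exp (- ((1 - t) / 2) * x^2) * exp (- ((1 - t) / 2) * y^2) * CF t"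
    by (intro mult_mono) auto
  then show ?thesis unfolding FF_def Q_def by (simp add: mult_ac)
qed


definition MG :: "real \<Rightarrow> real" where
  "MG t = CF t * (2 / ((1 - t^2)^2 * ((1 - t) / 4)) + 1 / (1 - t^2))"

lemma GG_bound:
  fixes r t x y :: real
  assumes rt: "\<bar>r\<bar> \<le> t" and t1: "t < 1"
  shows "\<bar>GG r x y\<bar> \<le> MG t * exp (- ((1 - t) / 4) * x^2) * exp (- ((1 - t) / 4) * y^2)"
proof -
  note sb = s_bounds[OF rt t1]
  define s where "s = 1 - r^2"
  define s0 where "s0 = 1 - t^2"
  define u where "u = x^2 + y^2"
  define c where "c = (1 - t) / 4"
  have c0: "0 < c" unfolding c_def using t1 by simp
  have u0: "0 \<le> u" unfolding u_def by simp
  have s0p: "0 < s0" "s0 \<le> s" "0 < s" unfolding s_def s0_def using sb by auto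
  have r1: "\<bar>r\<bar> \<le> 1" using rt t1 by simp
  have p1: "\<bar>(x - r * y) * (y - r * x)\<bar> \<le> 2 * u"
  proof -
    have "\<bar>r * y\<bar> \<le> \<bar>y\<bar>" using r1 by (simp add: abs_mult mult_left_le_one_le)
    then have a1: "\<bar>x - r * y\<bar> \<le> \<bar>x\<bar> + \<bar>y\<bar>"
      using abs_triangle_ineq4[of x "r * y"] by linarith
    have "\<bar>r * x\<bar> \<le> \<bar>x\<bar>" using r1 by (simp add: abs_mult mult_left_le_one_le)
    then have a2: "\<bar>y - r * x\<bar> \<le> \<bar>x\<bar> + \<bar>y\<bar>"
      using abs_triangle_ineq4[of y "r * x"] by linarith
    have "\<bar>(x - r * y) * (y - r * x)\<bar> \<le> (\<bar>x\<bar> + \<bar>y\<bar>) * (\<bar>x\<bar> + \<bar>y\<bar>)"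
      unfolding abs_mult using a1 a2 by (intro mult_mono) auto
    also have "\<dots> \<le> 2 * u"
    proof -
      have "0 \<le> (\<bar>x\<bar> - \<bar>y\<bar>)^2" by simp
      then show ?thesis unfolding u_def by (simp add: power2_eq_square algebra_simps)
    qed
    finally show ?thesis .
  qed
  have p2: "\<bar>(x - r * y) * (y - r * x) / s^2 + r / s\<bar> \<le> 2 * u / s0^2 + 1 / s0"
  proof -
    have "\<bar>(x - r * y) * (y - r * x) / s^2\<bar> \<le> 2 * u / s^2"
      using p1 s0p by (simp add: abs_divide divide_right_mono)
    also have "\<dots> \<le> 2 * u / s0^2"
      using s0p u0 by (intro divide_left_mono power_mono mult_pos_pos) auto
    finally have b1: "\<bar>(x - r * y) * (y - r * x) / s^2\<bar> \<le> 2 * u / s0^2" .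
    have "\<bar>r / s\<bar> \<le> 1 / s" using r1 s0p by (simp add: abs_divide divide_right_mono)
    also have "\<dots> \<le> 1 / s0" using s0p by (intro divide_left_mono) auto
    finally have b2: "\<bar>r / s\<bar> \<le> 1 / s0" .
    show ?thesis by (rule order_trans[OF abs_triangle_ineq add_mono[OF b1 b2]])
  qed
  define E1 where "E1 = exp (- (c * u))"
  define E2 where "E2 = exp (- (2 * c) * u)"
  have E1p: "0 < E1" unfolding E1_def by simp
  have E2: "E2 = E1 * E1" unfolding E1_def E2_def by (simp add: exp_add[symmetric])
  have "c * u * E1 \<le> exp (c * u) * E1"
    using exp_ge_add_one_self[of "c * u"] E1p by (intro mult_right_mono) linarith+
  also have "exp (c * u) * E1 = 1" unfolding E1_def by (simp add: exp_minus)
  finally have cu: "c * u * E1 \<le> 1" .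
  have A: "u * E2 \<le> E1 / c"
  proof -
    have "u * E2 = (c * u * E1) * E1 / c" unfolding E2 using c0 by (simp add: field_simps)
    also have "\<dots> \<le> 1 * E1 / c" using cu E1p c0 by (intro divide_right_mono mult_right_mono) auto
    finally show ?thesis by simp
  qed
  have B: "E2 \<le> E1" unfolding E1_def E2_def using c0 u0 by (simp add: mult_left_mono)
  have ke: "E2 * (2 * u / s0^2 + 1 / s0) \<le> E1 * (2 / (s0^2 * c) + 1 / s0)"
  proof -
    have l: "E2 * (2 * u / s0^2 + 1 / s0) = (2 / s0^2) * (u * E2) + (1 / s0) * E2"
      by (simp add: field_simps)
    have r: "E1 * (2 / (s0^2 * c) + 1 / s0) = (2 / s0^2) * (E1 / c) + (1 / s0) * E1"
      by (simp add: field_simps)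
    have "(2 / s0^2) * (u * E2) \<le> (2 / s0^2) * (E1 / c)" using A by (intro mult_left_mono) auto
    moreover have "(1 / s0) * E2 \<le> (1 / s0) * E1" using B s0p by (intro mult_left_mono) auto
    ultimately show ?thesis unfolding l r by linarith
  qed
  have F0: "0 \<le> FF r x y" using FF_nonneg r1 rt t1 by simp
  have arg: "- ((1 - t) / 2) * x^2 + - ((1 - t) / 2) * y^2 = - (2 * c) * u"
    unfolding c_def u_def by (simp add: field_simps)
  have Fb: "FF r x y \<le> CF t * E2"
    using FF_bound[OF rt t1, of x y] by (simp only: E2_def arg[symmetric] exp_add mult.assoc)
  have CF0: "0 \<le> CF t" unfolding CF_def using sb by simp
  have "\<bar>GG r x y\<bar> = FF r x y * \<bar>(x - r * y) * (y - r * x) / s^2 + r / s\<bar>"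
    unfolding GG_def s_def using F0 by (simp add: abs_mult)
  also have "\<dots> \<le> CF t * E2 * (2 * u / s0^2 + 1 / s0)"
    using Fb F0 p2 by (intro mult_mono) auto
  also have "\<dots> \<le> CF t * (E1 * (2 / (s0^2 * c) + 1 / s0))"
    using ke CF0 by (simp add: mult.assoc mult_left_mono)
  also have "\<dots> = MG t * exp (- ((1 - t) / 4) * x^2) * exp (- ((1 - t) / 4) * y^2)"
  proof -
    have arg2: "- ((1 - t) / 4) * x^2 + - ((1 - t) / 4) * y^2 = - (c * u)"
      unfolding c_def u_def by (simp add: field_simps)
    have ee: "exp (- ((1 - t) / 4) * x^2) * exp (- ((1 - t) / 4) * y^2) = E1"
      unfolding E1_def arg2[symmetric] exp_add by simp
    have A: "MG t * exp (- ((1 - t) / 4) * x^2) * exp (- ((1 - t) / 4) * y^2) = MG t * E1"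
      using ee by (simp only: mult.assoc)
    have B: "CF t * (E1 * (2 / (s0^2 * c) + 1 / s0)) = MG t * E1"
      unfolding MG_def s0_def c_def by (simp add: algebra_simps)
    show ?thesis by (rule trans[OF B A[symmetric]])
  qed
  finally show ?thesis .
qed



lemma s_pos: "\<bar>r\<bar> < 1 \<Longrightarrow> 0 < 1 - (r::real)^2"
  using s_bounds[of r "\<bar>r\<bar>"] by simp

lemma KK_lim: assumes r1: "\<bar>r\<bar> < 1" shows "((\<lambda>y. KK r x y) \<longlongrightarrow> 0) at_top"
proof -
  have s: "0 < 1 - r^2" using s_pos[OF r1] .
  define k where "k = 1 / (2 * (1 - r^2))"
  have k0: "k > 0" unfolding k_def using s by simp
  have arg: "\<And>y. eF r x y = -k*(x^2 - 2*r*x*y + y^2)" unfolding eF_def k_def by (simp add: diff_divide_distrib add_divide_distrib)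
  have eq: "\<And>y. KK r x y = (- cF r / (1 - r^2)) * ((x - r*y) * exp(-k*(x^2 - 2*r*x*y + y^2)))"
    unfolding KK_def FF_alt arg using s by (simp add: field_simps)
  have "((\<lambda>y::real. (x - r*y) * exp(-k*(x^2 - 2*r*x*y + y^2))) \<longlongrightarrow> 0) at_top"
    using k0 by real_asymp
  then have "((\<lambda>y. (- cF r / (1 - r^2)) * ((x - r*y) * exp(-k*(x^2 - 2*r*x*y + y^2)))) \<longlongrightarrow> 0) at_top"
    by (rule tendsto_mult_right_zero)
  then show ?thesis unfolding eq .
qed

lemma FF_lim: assumes r1: "\<bar>r\<bar> < 1" shows "((\<lambda>x. FF r x y) \<longlongrightarrow> 0) at_top"
proof -
  have s: "0 < 1 - r^2" using s_pos[OF r1] .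
  define k where "k = 1 / (2 * (1 - r^2))"
  have k0: "k > 0" unfolding k_def using s by simp
  have arg: "\<And>x. eF r x y = -k*(x^2 - 2*r*x*y + y^2)" unfolding eF_def k_def by (simp add: diff_divide_distrib add_divide_distrib)
  have eq: "\<And>x. FF r x y = cF r * exp(-k*(x^2 - 2*r*x*y + y^2))"
    unfolding FF_alt arg ..
  have "((\<lambda>x::real. exp(-k*(x^2 - 2*r*x*y + y^2))) \<longlongrightarrow> 0) at_top"
    using k0 by real_asymp
  then have "((\<lambda>x. cF r * exp(-k*(x^2 - 2*r*x*y + y^2))) \<longlongrightarrow> 0) at_top"
    by (rule tendsto_mult_right_zero)
  then show ?thesis unfolding eq .
qed

lemma GG_cont: "\<bar>r\<bar> < 1 \<Longrightarrow> isCont (\<lambda>y. GG r x y) y"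
  using s_pos[of r] unfolding GG_def FF_def by (intro continuous_intros) auto

lemma GG_cont_r: "\<bar>r\<bar> < 1 \<Longrightarrow> isCont (\<lambda>r. GG r x y) r"
  using s_pos[of r] unfolding GG_def FF_def by (intro continuous_intros) auto

lemma KK_cont: "\<bar>r\<bar> < 1 \<Longrightarrow> isCont (\<lambda>x. - KK r x y) x"
  using s_pos[of r] unfolding KK_def FF_def by (intro continuous_intros) auto

lemma GG_meas: "(\<lambda>z. GG r (fst z) (snd z)) \<in> borel_measurable borel"
proof -
  have "(\<lambda>z. GG r (fst z) (snd z)) \<in> borel_measurable (borel \<Otimes>\<^sub>M borel)"
    unfolding GG_def FF_def by measurable
  then show ?thesis unfolding borel_prod .
qed

lemma Q_borel[measurable]: "({a..} \<times> {b..} :: (real \<times> real) set) \<in> sets borel"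
  by (intro borel_closed closed_Times) auto

lemma S3:
  assumes r1: "\<bar>r\<bar> < 1"
  shows "(\<integral>z. indicator ({a..} \<times> {b..}) z * GG r (fst z) (snd z) \<partial>lborel) = FF r a b"
proof -
  define t where "t = \<bar>r\<bar>"
  have rt: "\<bar>r\<bar> \<le> t" and t1: "t < 1" unfolding t_def using r1 by auto
  define c where "c = (1 - t) / 4"
  have c0: "0 < c" unfolding c_def using t1 by simp
  have s: "0 < 1 - r^2" using s_pos[OF r1] .
  define f where "f = (\<lambda>z. indicator ({a..} \<times> {b..}) z * GG r (fst z) (snd z))"
  have [measurable]: "(\<lambda>z. GG r (fst z) (snd z)) \<in> borel_measurable borel" by (rule GG_meas)
  have mf: "f \<in> borel_measurable lborel" unfolding f_def by measurable
  have intG: "integrable lborel f"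
  proof (rule Bochner_Integration.integrable_bound[OF _ mf])
    show "integrable lborel (\<lambda>z::real\<times>real. MG t * (exp (- c * (fst z)^2) * exp (- c * (snd z)^2)))"
      using integrable_gauss2[OF c0] by (rule integrable_mult_right)
    show "AE z in lborel. norm (f z) \<le> norm (MG t * (exp (- c * (fst z)^2) * exp (- c * (snd z)^2)))"
    proof (rule AE_I2)
      fix z :: "real \<times> real"
      have "norm (f z) \<le> \<bar>GG r (fst z) (snd z)\<bar>" unfolding f_def by (simp add: indicator_def)
      also have "\<dots> \<le> MG t * exp (- c * (fst z)^2) * exp (- c * (snd z)^2)"
        unfolding c_def by (rule GG_bound[OF rt t1])
      also have "\<dots> \<le> norm (MG t * (exp (- c * (fst z)^2) * exp (- c * (snd z)^2)))"
        by (simp add: mult.assoc)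
      finally show "norm (f z) \<le> norm (MG t * (exp (- c * (fst z)^2) * exp (- c * (snd z)^2)))" .
    qed
  qed
  have intP: "integrable (lborel \<Otimes>\<^sub>M lborel) f" using intG unfolding lborel_prod .
  have fxy: "\<And>x y. f (x, y) = indicator {a..} x * (indicator {b..} y * GG r x y)"
    unfolding f_def by (simp add: indicator_times)
  have inner: "\<And>x. (\<integral>y. indicator {b..} y * GG r x y \<partial>lborel) = - KK r x b"
  proof -
    fix x
    have "(\<integral>y. indicator {b..} y * GG r x y \<partial>lborel) = 0 - KK r x b"
    proof (rule FTC_Ici)
      show "\<And>y. (KK r x has_real_derivative GG r x y) (at y)" using D2[OF s] by simp
      show "\<And>y. isCont (GG r x) y" using GG_cont[OF r1] by simp
      show "(KK r x \<longlongrightarrow> 0) at_top" using KK_lim[OF r1] by simp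
      show "integrable lborel (\<lambda>y. indicator {b..} y * GG r x y)"
      proof (rule Bochner_Integration.integrable_bound)
        show "integrable lborel (\<lambda>y. MG t * exp (- c * x^2) * exp (- c * y^2))"
          using integrable_gauss[OF c0] by (rule integrable_mult_right)
        have mG1[measurable]: "GG r x \<in> borel_measurable borel"
          by (rule borel_measurable_continuous_onI, rule continuous_at_imp_continuous_on) (use GG_cont[OF r1] in auto)
        show "(\<lambda>y. indicator {b..} y * GG r x y) \<in> borel_measurable lborel"
          by measurable
        show "AE y in lborel. norm (indicator {b..} y * GG r x y) \<le> norm (MG t * exp (- c * x^2) * exp (- c * y^2))"
        proof (rule AE_I2)
          fix y
          have "norm (indicator {b..} y * GG r x y) \<le> \<bar>GG r x y\<bar>" by (simp add: indicator_def)
          also have "\<dots> \<le> MG t * exp (- c * x^2) * exp (- c * y^2)"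
            unfolding c_def by (rule GG_bound[OF rt t1])
          also have "\<dots> \<le> norm (MG t * exp (- c * x^2) * exp (- c * y^2))" by simp
          finally show "norm (indicator {b..} y * GG r x y) \<le> norm (MG t * exp (- c * x^2) * exp (- c * y^2))" .
        qed
      qed
    qed
    then show "(\<integral>y. indicator {b..} y * GG r x y \<partial>lborel) = - KK r x b" by simp
  qed
  have fx: "\<And>x. (\<integral>y. f (x, y) \<partial>lborel) = indicator {a..} x * (- KK r x b)"
    unfolding fxy inner[symmetric] by (rule integral_mult_right_zero)
  have "(\<integral>z. f z \<partial>lborel) = (\<integral>x. (\<integral>y. f (x, y) \<partial>lborel) \<partial>lborel)"
    using lborel_pair.integral_fst'[OF intP] unfolding lborel_prod by simp
  also have "\<dots> = (\<integral>x. indicator {a..} x * (- KK r x b) \<partial>lborel)" unfolding fx ..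
  also have "\<dots> = 0 - (- FF r a b)"
  proof (rule FTC_Ici)
    show "\<And>x. ((\<lambda>x. - FF r x b) has_real_derivative - KK r x b) (at x)"
      using D3[OF s] by (intro DERIV_minus)
    show "\<And>x. isCont (\<lambda>x. - KK r x b) x" using KK_cont[OF r1] by simp
    show "((\<lambda>x. - FF r x b) \<longlongrightarrow> 0) at_top" using tendsto_minus[OF FF_lim[OF r1]] by simp
    show "integrable lborel (\<lambda>x. indicator {a..} x * - KK r x b)"
      using lborel_pair.integrable_fst'[OF intP] unfolding fx .
  qed
  finally show ?thesis unfolding f_def by simp
qed


lemma GG_meas3: "(\<lambda>(r, z). indicator {p..q} r * (indicator ({a..} \<times> {b..}) z * GG r (fst z) (snd z)))
   \<in> borel_measurable (lborel \<Otimes>\<^sub>M (lborel :: (real \<times> real) measure))"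
proof -
  have "(\<lambda>(r, z). indicator {p..q} r * (indicator ({a..} \<times> {b..}) z * GG r (fst z) (snd z)))
     \<in> borel_measurable (borel \<Otimes>\<^sub>M (borel \<Otimes>\<^sub>M borel :: (real \<times> real) measure))"
    unfolding GG_def FF_def by measurable
  then have m: "(\<lambda>(r, z). indicator {p..q} r * (indicator ({a..} \<times> {b..}) z * GG r (fst z) (snd z)))
     \<in> borel_measurable (borel \<Otimes>\<^sub>M (borel :: (real \<times> real) measure))"
    unfolding borel_prod .
  have eq: "borel_measurable (lborel \<Otimes>\<^sub>M (lborel::(real\<times>real) measure)) = borel_measurable (borel \<Otimes>\<^sub>M borel :: (real \<times> (real\<times>real)) measure)"
    by (rule measurable_cong_sets[OF sets_pair_measure_cong[OF sets_lborel sets_lborel] refl])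
  show ?thesis unfolding eq by (rule m)
qed


lemma S2:
  assumes pq: "p \<le> q" and p1: "\<bar>p\<bar> < 1" and q1: "\<bar>q\<bar> < 1"
  shows "(\<integral>z. indicator ({a..} \<times> {b..}) z * (FF q (fst z) (snd z) - FF p (fst z) (snd z)) \<partial>lborel)
       = (\<integral>r. indicator {p..q} r * FF r a b \<partial>lborel)"
proof -
  define t where "t = max \<bar>p\<bar> \<bar>q\<bar>"
  have t1: "t < 1" unfolding t_def using p1 q1 by simp
  have rt: "\<And>r. r \<in> {p..q} \<Longrightarrow> \<bar>r\<bar> \<le> t" unfolding t_def by auto
  have r1: "\<And>r. r \<in> {p..q} \<Longrightarrow> \<bar>r\<bar> < 1" using rt t1 by fastforce
  define c where "c = (1 - t) / 4"
  have c0: "0 < c" unfolding c_def using t1 by simp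
  define h where "h = (\<lambda>r (z::real\<times>real). indicator {p..q} r * (indicator ({a..} \<times> {b..}) z * GG r (fst z) (snd z)))"
  have hint: "integrable (lborel \<Otimes>\<^sub>M lborel) (case_prod h)"
  proof (rule Bochner_Integration.integrable_bound)
    show "integrable (lborel \<Otimes>\<^sub>M lborel) (\<lambda>(r, z::real\<times>real). indicator {p..q} r * (MG t * (exp (- c * (fst z)^2) * exp (- c * (snd z)^2))))"
    proof (rule integrable_pair_prod)
      show "integrable lborel (indicator {p..q} :: real \<Rightarrow> real)" by (rule integrable_real_indicator) (auto simp: pq)
      show "integrable lborel (\<lambda>z::real\<times>real. MG t * (exp (- c * (fst z)^2) * exp (- c * (snd z)^2)))"
        using integrable_gauss2[OF c0] by (rule integrable_mult_right)
    qed
    show "case_prod h \<in> borel_measurable (lborel \<Otimes>\<^sub>M lborel)"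
      unfolding h_def by (rule GG_meas3)
    show "AE x in lborel \<Otimes>\<^sub>M lborel. norm (case_prod h x) \<le> norm ((\<lambda>(r, z::real\<times>real). indicator {p..q} r * (MG t * (exp (- c * (fst z)^2) * exp (- c * (snd z)^2)))) x)"
    proof (rule AE_I2, clarify)
      fix r :: real and z :: "real \<times> real"
      show "norm (h r z) \<le> norm (indicator {p..q} r * (MG t * (exp (- c * (fst z)^2) * exp (- c * (snd z)^2))))"
      proof (cases "r \<in> {p..q}")
        case True
        have "norm (h r z) \<le> \<bar>GG r (fst z) (snd z)\<bar>" unfolding h_def by (simp add: indicator_def)
        also have "\<dots> \<le> MG t * exp (- c * (fst z)^2) * exp (- c * (snd z)^2)"
          unfolding c_def by (rule GG_bound[OF rt[OF True] t1])
        also have "\<dots> \<le> norm (indicator {p..q} r * (MG t * (exp (- c * (fst z)^2) * exp (- c * (snd z)^2))))"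
          using True by (simp add: mult.assoc)
        finally show ?thesis .
      next
        case False then show ?thesis unfolding h_def by simp
      qed
    qed
  qed
  have zint: "\<And>r. (\<integral>z. h r z \<partial>lborel) = indicator {p..q} r * FF r a b"
  proof -
    fix r
    show "(\<integral>z. h r z \<partial>lborel) = indicator {p..q} r * FF r a b"
    proof (cases "r \<in> {p..q}")
      case True
      have "(\<integral>z. h r z \<partial>lborel) = indicator {p..q} r * (\<integral>z. indicator ({a..} \<times> {b..}) z * GG r (fst z) (snd z) \<partial>lborel)"
        unfolding h_def by (rule integral_mult_right_zero)
      then show ?thesis using S3[OF r1[OF True]] by simp
    next
      case False then show ?thesis unfolding h_def by simp
    qed
  qed
  have rint: "\<And>z. (\<integral>r. h r z \<partial>lborel) = indicator ({a..} \<times> {b..}) z * (FF q (fst z) (snd z) - FF p (fst z) (snd z))"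
  proof -
    fix z :: "real \<times> real"
    have "(\<integral>r. h r z \<partial>lborel) = indicator ({a..} \<times> {b..}) z * (\<integral>r. indicator {p..q} r *\<^sub>R GG r (fst z) (snd z) \<partial>lborel)"
    proof -
      have "(\<lambda>r. h r z) = (\<lambda>r. indicator ({a..} \<times> {b..}) z * (indicator {p..q} r *\<^sub>R GG r (fst z) (snd z)))"
        unfolding h_def by (simp add: fun_eq_iff mult_ac)
      then show ?thesis by (simp only: integral_mult_right_zero)
    qed
    also have "(\<integral>r. indicator {p..q} r *\<^sub>R GG r (fst z) (snd z) \<partial>lborel) = FF q (fst z) (snd z) - FF p (fst z) (snd z)"
    proof (rule integral_FTC_atLeastAtMost[where F="\<lambda>r. FF r (fst z) (snd z)" and f="\<lambda>r. GG r (fst z) (snd z)", OF pq])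
      show "\<And>x. p \<le> x \<Longrightarrow> x \<le> q \<Longrightarrow> ((\<lambda>r. FF r (fst z) (snd z)) has_vector_derivative GG x (fst z) (snd z)) (at x within {p..q})"
      proof -
        fix x assume "p \<le> x" "x \<le> q"
        then have "x \<in> {p..q}" by simp
        then have sx: "0 < 1 - x^2" by (rule s_pos[OF r1])
        have "((\<lambda>r. FF r (fst z) (snd z)) has_real_derivative GG x (fst z) (snd z)) (at x within {p..q})"
          using D1[OF sx] by (rule has_field_derivative_at_within)
        then show "((\<lambda>r. FF r (fst z) (snd z)) has_vector_derivative GG x (fst z) (snd z)) (at x within {p..q})"
          by (simp add: has_real_derivative_iff_has_vector_derivative)
      qed
      show "continuous_on {p..q} (\<lambda>r. GG r (fst z) (snd z))"
      proof (intro continuous_at_imp_continuous_on ballI)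
        fix x :: real assume "x \<in> {p..q}"
        then show "isCont (\<lambda>r. GG r (fst z) (snd z)) x" by (rule GG_cont_r[OF r1])
      qed
    qed
    finally show "(\<integral>r. h r z \<partial>lborel) = indicator ({a..} \<times> {b..}) z * (FF q (fst z) (snd z) - FF p (fst z) (snd z))" .
  qed
  have "(\<integral>z. (\<integral>r. h r z \<partial>lborel) \<partial>lborel) = (\<integral>r. (\<integral>z. h r z \<partial>lborel) \<partial>lborel)"
    by (rule lborel_pair.Fubini_integral[OF hint])
  then show ?thesis unfolding rint zint .
qed


lemma bvn_density_FF: "bvn_density d = (\<lambda>z. FF d (fst z) (snd z))"
  by (simp add: fun_eq_iff bvn_density_def FF_def Let_def)

lemma FF_meas: "(\<lambda>z. FF r (fst z) (snd z)) \<in> borel_measurable borel"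
proof -
  have "(\<lambda>z. FF r (fst z) (snd z)) \<in> borel_measurable (borel \<Otimes>\<^sub>M borel)"
    unfolding FF_def by measurable
  then show ?thesis unfolding borel_prod .
qed

lemma intF:
  assumes d1: "\<bar>d\<bar> < 1"
  shows "integrable lborel (\<lambda>z. indicator ({a..} \<times> {b..}) z * FF d (fst z) (snd z))"
proof (rule Bochner_Integration.integrable_bound)
  define t where "t = \<bar>d\<bar>"
  have rt: "\<bar>d\<bar> \<le> t" and t1: "t < 1" unfolding t_def using d1 by auto
  define c where "c = (1 - t) / 2"
  have c0: "0 < c" unfolding c_def using t1 by simp
  show "integrable lborel (\<lambda>z::real\<times>real. CF t * (exp (- c * (fst z)^2) * exp (- c * (snd z)^2)))"
    using integrable_gauss2[OF c0] by (rule integrable_mult_right)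
  have [measurable]: "(\<lambda>z. FF d (fst z) (snd z)) \<in> borel_measurable borel" by (rule FF_meas)
  show "(\<lambda>z. indicator ({a..} \<times> {b..}) z * FF d (fst z) (snd z)) \<in> borel_measurable lborel"
    by measurable
  show "AE z in lborel. norm (indicator ({a..} \<times> {b..}) z * FF d (fst z) (snd z)) \<le> norm (CF t * (exp (- c * (fst z)^2) * exp (- c * (snd z)^2)))"
  proof (rule AE_I2)
    fix z :: "real \<times> real"
    have "norm (indicator ({a..} \<times> {b..}) z * FF d (fst z) (snd z)) \<le> \<bar>FF d (fst z) (snd z)\<bar>"
      by (simp add: indicator_def)
    also have "\<dots> = FF d (fst z) (snd z)" using FF_nonneg[OF d1] by simp
    also have "\<dots> \<le> CF t * exp (- c * (fst z)^2) * exp (- c * (snd z)^2)"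
      unfolding c_def by (rule FF_bound[OF rt t1])
    also have "\<dots> \<le> norm (CF t * (exp (- c * (fst z)^2) * exp (- c * (snd z)^2)))"
      by (simp add: mult.assoc)
    finally show "norm (indicator ({a..} \<times> {b..}) z * FF d (fst z) (snd z)) \<le> norm (CF t * (exp (- c * (fst z)^2) * exp (- c * (snd z)^2)))" .
  qed
qed

lemma meas_eq:
  assumes d1: "\<bar>d\<bar> < 1"
  shows "measure (bvn d) ({a..} \<times> {b..}) = (\<integral>z. indicator ({a..} \<times> {b..}) z * FF d (fst z) (snd z) \<partial>lborel)"
proof -
  have [measurable]: "(\<lambda>z. FF d (fst z) (snd z)) \<in> borel_measurable borel" by (rule FF_meas)
  have nn: "AE z in lborel. 0 \<le> indicator ({a..} \<times> {b..}) z * FF d (fst z) (snd z)"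
    using FF_nonneg[OF d1] by (auto simp: indicator_def)
  have "emeasure (bvn d) ({a..} \<times> {b..}) = (\<integral>\<^sup>+ z. ennreal (FF d (fst z) (snd z)) * indicator ({a..} \<times> {b..}) z \<partial>lborel)"
    unfolding bvn_def bvn_density_FF by (rule emeasure_density) auto
  also have "\<dots> = (\<integral>\<^sup>+ z. ennreal (indicator ({a..} \<times> {b..}) z * FF d (fst z) (snd z)) \<partial>lborel)"
    by (intro nn_integral_cong) (auto simp: indicator_def)
  also have "\<dots> = ennreal (\<integral>z. indicator ({a..} \<times> {b..}) z * FF d (fst z) (snd z) \<partial>lborel)"
    by (rule nn_integral_eq_integral[OF intF[OF d1] nn])
  finally have "emeasure (bvn d) ({a..} \<times> {b..}) = ennreal (\<integral>z. indicator ({a..} \<times> {b..}) z * FF d (fst z) (snd z) \<partial>lborel)" .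
  moreover have "0 \<le> (\<integral>z. indicator ({a..} \<times> {b..}) z * FF d (fst z) (snd z) \<partial>lborel)"
    by (rule integral_nonneg_AE[OF nn])
  ultimately show ?thesis unfolding measure_def by simp
qed

lemma FF_pt:
  fixes r d a b :: real
  assumes rd: "\<bar>r\<bar> \<le> \<bar>d\<bar>" and d1: "\<bar>d\<bar> < 1" and a: "a > 0" and b: "b > 0"
  shows "FF r a b \<le> 1 / (2 * pi) * (1 / sqrt (1 - d^2)) * exp (- (a^2 + b^2) / 2)
           * exp (\<bar>d\<bar> * a * b / (1 - d^2))"
proof -
  note sb = s_bounds[OF rd d1]
  define s where "s = 1 - r^2"
  define s0 where "s0 = 1 - \<bar>d\<bar>^2"
  have s0d: "s0 = 1 - d^2" unfolding s0_def by simp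
  have sp: "0 < s0" "s0 \<le> s" "s \<le> 1" "0 < s" using sb unfolding s_def s0_def by auto
  have ab: "0 \<le> a * b" using a b by simp
  have e1: "- (a^2 + b^2) / (2 * s) \<le> - (a^2 + b^2) / 2"
  proof -
    have "(a^2 + b^2) / 2 \<le> (a^2 + b^2) / (2 * s)"
      using sp by (intro divide_left_mono) auto
    then show ?thesis unfolding minus_divide_left[symmetric] by linarith
  qed
  have e2: "r * a * b / s \<le> \<bar>d\<bar> * a * b / s0"
  proof -
    have "r * (a * b) \<le> \<bar>d\<bar> * (a * b)" using rd ab
      by (meson abs_ge_self mult_right_mono order_trans)
    then have "r * a * b / s \<le> \<bar>d\<bar> * a * b / s" using sp by (simp add: divide_right_mono mult.assoc)
    also have "\<dots> \<le> \<bar>d\<bar> * a * b / s0" using sp ab a b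
      by (intro divide_left_mono mult_nonneg_nonneg) auto
    finally show ?thesis .
  qed
  have arg: "- (a^2 - 2 * r * a * b + b^2) / (2 * (1 - r^2)) = - (a^2 + b^2) / (2 * s) + r * a * b / s"
  proof -
    have "- (a^2 - 2 * r * a * b + b^2) / (2 * s) = - (a^2 + b^2) / (2 * s) + r * a * b / s"
      using sp(4) by (simp add: field_simps)
    then show ?thesis unfolding s_def .
  qed
  have ex: "exp (- (a^2 - 2 * r * a * b + b^2) / (2 * (1 - r^2))) \<le> exp (- (a^2 + b^2) / 2) * exp (\<bar>d\<bar> * a * b / s0)"
    unfolding arg exp_add[symmetric] exp_le_cancel_iff by (rule add_mono[OF e1 e2])
  have den: "1 / (2 * pi * sqrt (1 - r^2)) \<le> 1 / (2 * pi) * (1 / sqrt s0)"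
    using sp unfolding s_def by (simp add: divide_simps)
  have "FF r a b = exp (- (a^2 - 2 * r * a * b + b^2) / (2 * (1 - r^2))) * (1 / (2 * pi * sqrt (1 - r^2)))"
    unfolding FF_def by simp
  also have "\<dots> \<le> (exp (- (a^2 + b^2) / 2) * exp (\<bar>d\<bar> * a * b / s0)) * (1 / (2 * pi) * (1 / sqrt s0))"
    using ex den sp unfolding s_def by (intro mult_mono) auto
  finally show ?thesis unfolding s0d by (simp add: mult_ac)
qed


lemma FF_cont_r: "\<bar>r\<bar> < 1 \<Longrightarrow> isCont (\<lambda>r. FF r a b) r"
  by (rule DERIV_isCont[OF D1[OF s_pos]])

lemma int_bound:
  fixes p q d a b :: real
  assumes pq: "p \<le> q" and pd: "\<bar>p\<bar> \<le> \<bar>d\<bar>" and qd: "\<bar>q\<bar> \<le> \<bar>d\<bar>" and d1: "\<bar>d\<bar> < 1"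
    and a: "a > 0" and b: "b > 0"
  shows "0 \<le> (\<integral>r. indicator {p..q} r * FF r a b \<partial>lborel)"
    and "(\<integral>r. indicator {p..q} r * FF r a b \<partial>lborel) \<le>
          (1 / (2 * pi) * (1 / sqrt (1 - d^2)) * exp (- (a^2 + b^2) / 2) * exp (\<bar>d\<bar> * a * b / (1 - d^2))) * (q - p)"
proof -
  define B where "B = 1 / (2 * pi) * (1 / sqrt (1 - d^2)) * exp (- (a^2 + b^2) / 2) * exp (\<bar>d\<bar> * a * b / (1 - d^2))"
  have rin: "\<And>r. r \<in> {p..q} \<Longrightarrow> \<bar>r\<bar> \<le> \<bar>d\<bar>" using pd qd by auto
  have r1: "\<And>r. r \<in> {p..q} \<Longrightarrow> \<bar>r\<bar> < 1" using rin d1 by fastforce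
  have int1: "integrable lborel (\<lambda>r. FF r a b * indicator {p..q} r)"
    by (rule borel_integrable_atLeastAtMost) (rule FF_cont_r, rule r1, simp)
  then have int2: "integrable lborel (\<lambda>r. indicator {p..q} r * FF r a b)" by (simp add: mult.commute)
  have pos: "\<And>r. 0 \<le> indicator {p..q} r * FF r a b"
    using FF_nonneg r1 by (auto simp: indicator_def)
  show "0 \<le> (\<integral>r. indicator {p..q} r * FF r a b \<partial>lborel)"
    by (rule integral_nonneg_AE) (rule AE_I2, rule pos)
  have int3: "integrable lborel (\<lambda>r. indicator {p..q} r * B)"
    by (intro integrable_mult_left integrable_real_indicator) (auto simp: pq)
  have "(\<integral>r. indicator {p..q} r * FF r a b \<partial>lborel) \<le> (\<integral>r. indicator {p..q} r * B \<partial>lborel)"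
  proof (rule integral_mono[OF int2 int3])
    fix r :: real
    show "indicator {p..q} r * FF r a b \<le> indicator {p..q} r * B"
    proof (cases "r \<in> {p..q}")
      case True
      then show ?thesis unfolding B_def using FF_pt[OF rin[OF True] d1 a b] by simp
    qed simp
  qed
  also have "(\<integral>r. indicator {p..q} r * B \<partial>lborel) = B * (q - p)"
    using pq by (simp add: integral_mult_left_zero)
  finally show "(\<integral>r. indicator {p..q} r * FF r a b \<partial>lborel) \<le>
          (1 / (2 * pi) * (1 / sqrt (1 - d^2)) * exp (- (a^2 + b^2) / 2) * exp (\<bar>d\<bar> * a * b / (1 - d^2))) * (q - p)"
    unfolding B_def .
qed

theorem lemma4p4:
  fixes d a b :: real
  assumes "\<bar>d\<bar> < 1" and "a > 0" and "b > 0"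
  shows "\<bar>phi d a b\<bar> \<le> 1 / (2 * pi) * (1 / sqrt (1 - d^2)) * exp (- (a^2 + b^2) / 2)
           * exp (\<bar>d\<bar> * a * b / (1 - d^2)) * \<bar>d\<bar>"
proof -
  define B where "B = 1 / (2 * pi) * (1 / sqrt (1 - d^2)) * exp (- (a^2 + b^2) / 2) * exp (\<bar>d\<bar> * a * b / (1 - d^2))"
  define Q where "Q = ({a..} \<times> {b..} :: (real \<times> real) set)"
  have d0: "\<bar>0::real\<bar> < 1" by simp
  have phi_eq: "phi d a b = (\<integral>z. indicator Q z * (FF d (fst z) (snd z) - FF 0 (fst z) (snd z)) \<partial>lborel)"
  proof -
    have "(\<integral>z. indicator Q z * (FF d (fst z) (snd z) - FF 0 (fst z) (snd z)) \<partial>lborel)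
        = (\<integral>z. indicator Q z * FF d (fst z) (snd z) - indicator Q z * FF 0 (fst z) (snd z) \<partial>lborel)"
      by (simp add: right_diff_distrib)
    also have "\<dots> = (\<integral>z. indicator Q z * FF d (fst z) (snd z) \<partial>lborel) - (\<integral>z. indicator Q z * FF 0 (fst z) (snd z) \<partial>lborel)"
      unfolding Q_def by (rule Bochner_Integration.integral_diff[OF intF[OF assms(1)] intF[OF d0]])
    finally show ?thesis unfolding phi_def meas_eq[OF assms(1)] meas_eq[OF d0] Q_def by simp
  qed
  show ?thesis
  proof (cases "0 \<le> d")
    case True
    have "phi d a b = (\<integral>r. indicator {0..d} r * FF r a b \<partial>lborel)"
      unfolding phi_eq Q_def by (rule S2[OF True d0 assms(1)])
    moreover have "\<bar>0::real\<bar> \<le> \<bar>d\<bar>" "\<bar>d\<bar> \<le> \<bar>d\<bar>" by auto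
    note ib = int_bound[of 0 d d a b, OF True this assms(1) assms(2) assms(3)]
    ultimately show ?thesis using True ib by simp
  next
    case False
    then have dl: "d \<le> 0" by simp
    have "(\<integral>z. indicator Q z * (FF 0 (fst z) (snd z) - FF d (fst z) (snd z)) \<partial>lborel) = (\<integral>r. indicator {d..0} r * FF r a b \<partial>lborel)"
      unfolding Q_def by (rule S2[OF dl assms(1) d0])
    moreover have "(\<integral>z. indicator Q z * (FF 0 (fst z) (snd z) - FF d (fst z) (snd z)) \<partial>lborel) = - phi d a b"
    proof -
      have "\<And>z. indicator Q z * (FF 0 (fst z) (snd z) - FF d (fst z) (snd z)) = - (indicator Q z * (FF d (fst z) (snd z) - FF 0 (fst z) (snd z)))"
        by (simp add: algebra_simps)
      then show ?thesis unfolding phi_eq by (simp only: Bochner_Integration.integral_minus)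
    qed
    ultimately have "phi d a b = - (\<integral>r. indicator {d..0} r * FF r a b \<partial>lborel)" by simp
    moreover have "\<bar>d\<bar> \<le> \<bar>d\<bar>" "\<bar>0::real\<bar> \<le> \<bar>d\<bar>" by auto
    note ib = int_bound[of d 0 d a b, OF dl this assms(1) assms(2) assms(3)]
    ultimately show ?thesis using False ib by simp
  qed
qed

end
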